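(* Let $n>k$ and let $\mathcal{S}$ be a set of $k$-spaces in $\mathrm{AG}(n,q)$ pairwise intersecting in a $(k-1)$-space such that $\mathcal{S}$ is not a $(k-1)$-pencil. Then $|\mathcal{S}|\leq\theta_k$, and equality holds if and only if there exist an affine $(k+1)$-space $\Gamma$ and $\mathcal{S}$ is a maximal set of $\theta_k$ affine $k$-spaces in $\Gamma$ such that $\tilde\sigma_1\cap H_\infty\neq\tilde\sigma_2\cap H_\infty$ for all distinct $\sigma_1,\sigma_2\in\mathcal{S}$. Moreover, all elements of $\mathcal{S}$ are contained in an affine $(k+1)$-space.
   Context: $\mathrm{AG}(n,q)$ is viewed as $\mathrm{PG}(n,q)$ minus a hyperplane $H_\infty$; for an affine subspace $\alpha$, $\tilde\alpha$ denotes its projective closure. Affine subspaces intersect in a $(k-1)$-space if their affine intersection is an affine $(k-1)$-space. $\theta_k=\frac{q^{k+1}-1}{q-1}$. A $(k-1)$-pencil is the set of all affine $k$-spaces containing a fixed affine $(k-1)$-space. *)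

theory Defs
  imports "HOL-Analysis.Analysis"
begin

text \<open>AG(n,q) is modelled as the vector space F^n (F a finite field with q = CARD(F)
elements, n = CARD('n)). The projective closure of an affine subspace meets the hyperplane at infinity
exactly in the projective space of its direction W, so the condition on the points at
infinity is expressed via the direction.\<close>

definition aff_space :: "nat \<Rightarrow> ('a::field ^ 'n) set \<Rightarrow> bool" where
  "aff_space k A \<longleftrightarrow> (\<exists>v W. vec.subspace W \<and> vec.dim W = k \<and> A = (\<lambda>w. v + w) ` W)"

definition aff_dir :: "('a::field ^ 'n) set \<Rightarrow> ('a ^ 'n) set" where
  "aff_dir A = {x - y | x y. x \<in> A \<and> y \<in> A}"

definition at_infinity :: "('a::field ^ 'n) set \<Rightarrow> ('a ^ 'n) set set" where
  "at_infinity A = {L. vec.subspace L \<and> vec.dim L = 1 \<and> L \<subseteq> aff_dir A}"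

definition theta :: "nat \<Rightarrow> nat \<Rightarrow> nat" where
  "theta q k = (q ^ (k + 1) - 1) div (q - 1)"

definition pencil :: "nat \<Rightarrow> ('a::field ^ 'n) set \<Rightarrow> ('a ^ 'n) set set" where
  "pencil k P = {\<sigma>. aff_space k \<sigma> \<and> P \<subseteq> \<sigma>}"

end

theory Submission
  imports Defs
begin

lemma coset_recenter:
  fixes D :: "('a::field ^ 'n) set"
  assumes "vec.subspace D" "B = (\<lambda>w. b + w) ` D" "y \<in> B"
  shows "B = (\<lambda>w. y + w) ` D"
proof -
  from assms obtain d where d: "d \<in> D" "y = b + d" by auto
  show ?thesis
  proof
    show "B \<subseteq> (\<lambda>w. y + w) ` D"
    proof
      fix x assume "x \<in> B"
      then obtain e where "e \<in> D" "x = b + e" using assms by auto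
      then have "x = y + (e - d)" "e - d \<in> D" using d assms(1) vec.subspace_diff by auto
      then show "x \<in> (\<lambda>w. y + w) ` D" by blast
    qed
    show "(\<lambda>w. y + w) ` D \<subseteq> B"
    proof
      fix x assume "x \<in> (\<lambda>w. y + w) ` D"
      then obtain e where "e \<in> D" "x = y + e" by auto
      then have "x = b + (d + e)" "d + e \<in> D" using d assms(1) vec.subspace_add by (auto simp: add.assoc)
      then show "x \<in> B" using assms(2) by blast
    qed
  qed
qed

lemma aff_dir_coset:
  fixes D :: "('a::field ^ 'n) set"
  assumes "vec.subspace D"
  shows "aff_dir ((\<lambda>w. v + w) ` D) = D"
proof
  show "aff_dir ((+) v ` D) \<subseteq> D"
    unfolding aff_dir_def using assms vec.subspace_diff by fastforce
  show "D \<subseteq> aff_dir ((+) v ` D)"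
  proof
    fix w assume "w \<in> D"
    have "v + 0 \<in> (+) v ` D" using assms vec.subspace_0 by blast
    moreover have "w = (v + w) - (v + 0)" "v + w \<in> (+) v ` D" using \<open>w \<in> D\<close> by auto
    ultimately show "w \<in> aff_dir ((+) v ` D)" unfolding aff_dir_def by blast
  qed
qed

lemma aff_spaceE:
  fixes A :: "('a::field ^ 'n) set"
  assumes "aff_space k A"
  shows "vec.subspace (aff_dir A)" "vec.dim (aff_dir A) = k" "A \<noteq> {}"
    "\<And>x. x \<in> A \<Longrightarrow> A = (\<lambda>w. x + w) ` aff_dir A"
proof -
  obtain v W where W: "vec.subspace W" "vec.dim W = k" "A = (\<lambda>w. v + w) ` W"
    using assms unfolding aff_space_def by blast
  then have d: "aff_dir A = W" using aff_dir_coset by blast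
  show "vec.subspace (aff_dir A)" "vec.dim (aff_dir A) = k" using W d by auto
  show "A \<noteq> {}" using W vec.subspace_0 by blast
  show "\<And>x. x \<in> A \<Longrightarrow> A = (\<lambda>w. x + w) ` aff_dir A"
    using coset_recenter W d by metis
qed

lemma aff_spaceI:
  fixes D :: "('a::field ^ 'n) set"
  assumes "vec.subspace D" "vec.dim D = k" "A = (\<lambda>w. x + w) ` D"
  shows "aff_space k A"
  using assms unfolding aff_space_def by blast

lemma coset_subset_iff:
  fixes D E :: "('a::field ^ 'n) set"
  assumes "vec.subspace D" "vec.subspace E"
  shows "(\<lambda>w. x + w) ` D \<subseteq> (\<lambda>w. x + w) ` E \<longleftrightarrow> D \<subseteq> E"
  by auto

lemma coset_Int:
  fixes D E :: "('a::field ^ 'n) set"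
  shows "(\<lambda>w. x + w) ` D \<inter> (\<lambda>w. x + w) ` E = (\<lambda>w. x + w) ` (D \<inter> E)"
  by auto

lemma subspace_eq_dim:
  fixes D E :: "('a::field ^ 'n) set"
  assumes "vec.subspace D" "vec.subspace E" "D \<subseteq> E" "vec.dim E \<le> vec.dim D"
  shows "D = E"
  using vec.subspace_dim_equal assms by blast

lemma subspace_psubset_dim:
  fixes D E :: "('a::field ^ 'n) set"
  assumes "vec.subspace D" "vec.subspace E" "D \<subset> E"
  shows "vec.dim D < vec.dim E"
  using assms subspace_eq_dim vec.dim_subset
  by (metis le_neq_implies_less nat_le_linear psubsetE)

lemma aff_sub_eq:
  fixes A B D :: "('a::field ^ 'n) set"
  assumes "aff_space m A" "A \<subseteq> B" "vec.subspace D" "B = (\<lambda>w. b + w) ` D" "vec.dim D \<le> m"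
  shows "A = B"
proof -
  obtain v where v: "v \<in> A" using aff_spaceE(3)[OF assms(1)] by blast
  have A: "A = (\<lambda>w. v + w) ` aff_dir A" using aff_spaceE(4)[OF assms(1) v] .
  have B: "B = (\<lambda>w. v + w) ` D" using coset_recenter[OF assms(3,4)] v assms(2) by blast
  have "aff_dir A \<subseteq> D"
  proof
    fix x assume "x \<in> aff_dir A"
    then have "v + x \<in> B" using A assms(2) by blast
    then show "x \<in> D" using B by auto
  qed
  then have "aff_dir A = D" using subspace_eq_dim aff_spaceE(1,2)[OF assms(1)] assms(3,5) by metis
  then show ?thesis using A B by simp
qed

lemma exists_subspace_dim:
  fixes U :: "('a::field ^ 'n) set"
  assumes "vec.subspace U" "m \<le> vec.dim U"
  shows "\<exists>W. vec.subspace W \<and> W \<subseteq> U \<and> vec.dim W = m"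
proof -
  obtain B where B: "B \<subseteq> U" "vec.independent B" "U \<subseteq> vec.span B" "card B = vec.dim U"
    using vec.basis_exists by blast
  have "finite B" using B(2) vec.finiteI_independent by blast
  then obtain B' where B': "B' \<subseteq> B" "card B' = m" using assms(2) B(4)
    by (metis obtain_subset_with_card_n)
  have ind: "vec.independent B'" using B' B(2) vec.independent_mono by blast
  have "vec.span B' \<subseteq> U" using B' B(1) assms(1) vec.span_minimal by blast
  moreover have "vec.dim (vec.span B') = m" using vec.dim_span_eq_card_independent[OF ind] B' by simp
  ultimately show ?thesis using vec.subspace_span by blast
qed

lemma dim_span_insert_notin:
  fixes Y :: "('a::field ^ 'n) set"
  assumes "vec.subspace Y" "x \<notin> Y"
  shows "vec.dim (vec.span (insert x Y)) = vec.dim Y + 1"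
  using assms vec.dim_insert[of x Y] by (simp add: vec.span_eq_iff[THEN iffD2])

lemma hyperplane_decomp:
  fixes V V0 :: "('a::field ^ 'n) set"
  assumes "vec.subspace V0" "vec.subspace V" "V0 \<subseteq> V" "vec.dim V = vec.dim V0 + 1"
    "e \<in> V" "e \<notin> V0" "v \<in> V"
  shows "\<exists>a u. u \<in> V0 \<and> v = a *s e + u"
proof -
  let ?T = "vec.span (insert e V0)"
  have "?T \<subseteq> V" using assms vec.span_minimal by (metis insert_subset)
  moreover have "vec.dim ?T = vec.dim V" using dim_span_insert_notin assms by simp
  ultimately have "?T = V" using subspace_eq_dim vec.subspace_span assms(2) by (metis order_refl)
  then have "v \<in> ?T" using assms by simp
  then obtain a where "v - a *s e \<in> vec.span V0" unfolding vec.span_insert by blast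
  then have "v - a *s e \<in> V0" using assms(1) by (simp add: vec.span_eq_iff[THEN iffD2])
  then show ?thesis by (metis add.commute diff_add_cancel)
qed

fun tt :: "nat \<Rightarrow> nat \<Rightarrow> nat" where
  "tt q 0 = 1" | "tt q (Suc m) = 1 + q * tt q m"

lemma theta_tt:
  assumes "q \<ge> 2"
  shows "theta q m = tt q m"
proof -
  have "(q - 1) * tt q m = q ^ (m + 1) - 1"
  proof (induction m)
    case 0 then show ?case by simp
  next
    case (Suc m)
    have "(q - 1) * tt q (Suc m) = (q - 1) + q * ((q - 1) * tt q m)" by (simp add: algebra_simps)
    also have "\<dots> = (q - 1) + q * (q ^ (m + 1) - 1)" using Suc by simp
    also have "\<dots> = q ^ (Suc m + 1) - 1"
      using assms by (simp add: right_diff_distrib' )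
    finally show ?case .
  qed
  then show ?thesis unfolding theta_def using assms by (metis diff_is_0_eq nonzero_mult_div_cancel_left not_numeral_le_zero numeral_le_one_iff one_le_numeral order.trans semiring_norm(69) mult.commute)
qed

definition hyps :: "('a::field ^ 'n) set \<Rightarrow> nat \<Rightarrow> ('a ^ 'n) set set" where
  "hyps U m = {W. vec.subspace W \<and> W \<subseteq> U \<and> vec.dim W = m}"

lemma hyps_step_facts:
  fixes U U0 W :: "('a::field ^ 'n) set"
  assumes U: "vec.subspace U" "vec.dim U = m + 2"
    and U0: "vec.subspace U0" "U0 \<subseteq> U" "vec.dim U0 = m + 1"
    and e: "e \<in> U" "e \<notin> U0"
    and W: "W \<in> hyps U (m + 1)" "W \<noteq> U0"
  shows "W \<inter> U0 \<in> hyps U0 m"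
    and "\<And>z. z \<in> U0 \<Longrightarrow> z \<notin> W \<inter> U0 \<Longrightarrow> \<exists>c. e + c *s z \<in> W"
    and "\<And>x. x \<in> W \<Longrightarrow> x \<notin> U0 \<Longrightarrow> W = vec.span (insert x (W \<inter> U0))"
proof -
  have Ws: "vec.subspace W" "W \<subseteq> U" "vec.dim W = m + 1" using W unfolding hyps_def by auto
  have WnU0: "\<not> W \<subseteq> U0"
    using subspace_eq_dim[of W U0] Ws U0 W(2) by auto
  have U0nW: "\<not> U0 \<subseteq> W"
    using subspace_eq_dim[of U0 W] Ws U0 W(2) by auto
  let ?S = "{x + y |x y. x \<in> W \<and> y \<in> U0}"
  have Ss: "vec.subspace ?S" using vec.subspace_sums Ws(1) U0(1) by blast
  have SU: "?S \<subseteq> U" using Ws(2) U0(2) U(1) vec.subspace_add by blast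
  have WS: "W \<subseteq> ?S" using U0(1) vec.subspace_0 by force
  have "U0 \<subseteq> ?S" using Ws(1) vec.subspace_0 by force
  then have "W \<noteq> ?S" using U0nW by auto
  then have "W \<subset> ?S" using WS by (rule psubsetI[rotated])
  then have "vec.dim W < vec.dim ?S" by (rule subspace_psubset_dim[OF Ws(1) Ss])
  moreover have "vec.dim ?S \<le> vec.dim U" by (rule vec.dim_subset[OF SU])
  ultimately have dS: "vec.dim ?S = m + 2" using Ws U by simp
  have dI: "vec.dim (W \<inter> U0) = m" using vec.dim_sums_Int[OF Ws(1) U0(1)] dS Ws(3) U0(3) by simp
  have Is: "vec.subspace (W \<inter> U0)" using vec.subspace_inter Ws(1) U0(1) by blast
  show "W \<inter> U0 \<in> hyps U0 m" unfolding hyps_def using dI Is by blast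
  show "\<And>x. x \<in> W \<Longrightarrow> x \<notin> U0 \<Longrightarrow> W = vec.span (insert x (W \<inter> U0))"
  proof -
    fix x assume x: "x \<in> W" "x \<notin> U0"
    let ?T = "vec.span (insert x (W \<inter> U0))"
    have "?T \<subseteq> W" using x Ws(1) vec.span_minimal by (metis Int_lower1 insert_subset)
    moreover have "vec.dim ?T = m + 1" using dim_span_insert_notin[OF Is] x dI by simp
    ultimately have "?T = W" using subspace_eq_dim[OF vec.subspace_span Ws(1)] Ws(3) by simp
    then show "W = ?T" by simp
  qed
  show "\<And>z. z \<in> U0 \<Longrightarrow> z \<notin> W \<inter> U0 \<Longrightarrow> \<exists>c. e + c *s z \<in> W"
  proof -
    fix z assume z: "z \<in> U0" "z \<notin> W \<inter> U0"
    obtain w where w: "w \<in> W" "w \<notin> U0" using WnU0 by blast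
    have "vec.dim U = vec.dim U0 + 1" using U U0 by simp
    then have "\<exists>a u. u \<in> U0 \<and> w = a *s e + u"
      using hyperplane_decomp[OF U0(1) U(1) U0(2) _ e, of w] w Ws(2) by blast
    then obtain a u where au: "u \<in> U0" "w = a *s e + u" by blast
    have a0: "a \<noteq> 0" using au w by auto
    let ?u' = "(1 / a) *s u"
    have w': "(1 / a) *s w = e + ?u'" using a0 au
    proof -
      have "(1 / a) *s w = (1 / a) *s (a *s e) + ?u'" using au by (simp only: vec.scale_right_distrib)
      also have "(1 / a) *s (a *s e) = e" using a0 by (simp only: vec.scale_scale) simp
      finally show ?thesis .
    qed
    have w'W: "(1 / a) *s w \<in> W" using vec.subspace_scale Ws(1) w by blast
    have u'U0: "?u' \<in> U0" using vec.subspace_scale U0(1) au by blast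
    have "vec.dim U0 = vec.dim (W \<inter> U0) + 1" using dI U0(3) by simp
    then have "\<exists>c y. y \<in> W \<inter> U0 \<and> ?u' = c *s z + y"
      using hyperplane_decomp[OF Is U0(1) _ _ z(1) z(2) u'U0] by blast
    then obtain c y where cy: "y \<in> W \<inter> U0" "?u' = c *s z + y" by blast
    have "e + c *s z = (1 / a) *s w - y" using w' cy by (metis add_diff_cancel add.assoc)
    moreover have "(1 / a) *s w - y \<in> W" using vec.subspace_diff Ws(1) w'W cy by blast
    ultimately show "\<exists>c. e + c *s z \<in> W" by metis
  qed
qed

lemma hyp_count:
  fixes U :: "('a::{field,finite} ^ 'n) set"
  assumes "vec.subspace U" "vec.dim U = m + 1"
  shows "card (hyps U m) \<le> tt CARD('a) m"
  using assms
proof (induction m arbitrary: U)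
  case 0
  have "hyps U 0 \<subseteq> {{0}}"
  proof
    fix W assume "W \<in> hyps U 0"
    then have "vec.subspace W" "W \<subseteq> {0}" unfolding hyps_def using vec.dim_eq_0 by auto
    then have "W = {0}" using vec.subspace_0 by blast
    then show "W \<in> {{0}}" by simp
  qed
  then have "card (hyps U 0) \<le> card {{0::'a^'n}}" by (rule card_mono[rotated]) simp
  then show ?case by simp
next
  case (Suc m)
  have U: "vec.subspace U" "vec.dim U = m + 2" using Suc.prems by auto
  obtain U0 where U0: "vec.subspace U0" "U0 \<subseteq> U" "vec.dim U0 = m + 1"
    using exists_subspace_dim[OF U(1), of "m + 1"] U(2) by auto
  have IH: "card (hyps U0 m) \<le> tt CARD('a) m" using Suc.IH U0 by simp
  obtain e where e: "e \<in> U" "e \<notin> U0"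
  proof -
    have "\<not> U \<subseteq> U0"
    proof
      assume "U \<subseteq> U0"
      then have "vec.dim U \<le> vec.dim U0" by (rule vec.dim_subset)
      then show False using U U0 by simp
    qed
    then show ?thesis using that by blast
  qed
  define zf where "zf Y = (SOME z. z \<in> U0 \<and> z \<notin> Y)" for Y
  define cf where "cf W = (SOME c. e + c *s zf (W \<inter> U0) \<in> W)" for W
  define f where "f W = (if W = U0 then None else Some (W \<inter> U0, cf W))" for W
  have key: "W \<inter> U0 \<in> hyps U0 m \<and> W = vec.span (insert (e + cf W *s zf (W \<inter> U0)) (W \<inter> U0))"
    if W: "W \<in> hyps U (m + 1)" "W \<noteq> U0" for W
  proof -
    note F = hyps_step_facts[OF U U0 e W]
    have Y: "W \<inter> U0 \<in> hyps U0 m" by (rule F(1))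
    then have "vec.dim (W \<inter> U0) = m" unfolding hyps_def by simp
    then have "\<not> U0 \<subseteq> W \<inter> U0"
      using vec.dim_subset[of U0 "W \<inter> U0"] U0(3) by auto
    then have "\<exists>z. z \<in> U0 \<and> z \<notin> W \<inter> U0" by blast
    then have z: "zf (W \<inter> U0) \<in> U0" "zf (W \<inter> U0) \<notin> W \<inter> U0"
      unfolding zf_def by (metis (mono_tags, lifting) someI_ex)+
    have "\<exists>c. e + c *s zf (W \<inter> U0) \<in> W" by (rule F(2)[OF z])
    then have cW: "e + cf W *s zf (W \<inter> U0) \<in> W" unfolding cf_def by (rule someI_ex)
    have "e + cf W *s zf (W \<inter> U0) \<notin> U0"
    proof
      assume "e + cf W *s zf (W \<inter> U0) \<in> U0"
      moreover have "cf W *s zf (W \<inter> U0) \<in> U0" using vec.subspace_scale U0(1) z(1) by blast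
      ultimately have "(e + cf W *s zf (W \<inter> U0)) - cf W *s zf (W \<inter> U0) \<in> U0"
        using vec.subspace_diff U0(1) by blast
      then show False using e by simp
    qed
    then show ?thesis using Y F(3)[OF cW] by blast
  qed
  have inj: "inj_on f (hyps U (Suc m))"
  proof (rule inj_onI)
    fix W1 W2 assume W: "W1 \<in> hyps U (Suc m)" "W2 \<in> hyps U (Suc m)" "f W1 = f W2"
    show "W1 = W2"
    proof (cases "W1 = U0")
      case True
      then show ?thesis using W(3) unfolding f_def by (auto split: if_splits)
    next
      case False
      then have "W2 \<noteq> U0" using W(3) unfolding f_def by (auto split: if_splits)
      then have "W1 \<inter> U0 = W2 \<inter> U0" "cf W1 = cf W2" using W(3) False unfolding f_def by auto
      then show ?thesis using key[of W1] key[of W2] W False \<open>W2 \<noteq> U0\<close> by simp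
    qed
  qed
  have img: "f ` hyps U (Suc m) \<subseteq> insert None (Some ` (hyps U0 m \<times> UNIV))"
  proof
    fix x assume "x \<in> f ` hyps U (Suc m)"
    then obtain W where W: "W \<in> hyps U (Suc m)" "x = f W" by blast
    show "x \<in> insert None (Some ` (hyps U0 m \<times> UNIV))"
    proof (cases "W = U0")
      case True then show ?thesis using W unfolding f_def by simp
    next
      case False then show ?thesis using W key[of W] unfolding f_def by auto
    qed
  qed
  have fin: "finite (insert None (Some ` (hyps U0 m \<times> (UNIV :: 'a set))))" by simp
  have "card (hyps U (Suc m)) \<le> card (insert None (Some ` (hyps U0 m \<times> (UNIV :: 'a set))))"
    using card_inj_on_le[OF inj img fin] .
  also have "\<dots> \<le> Suc (card (Some ` (hyps U0 m \<times> (UNIV :: 'a set))))" by (rule card_insert_le_m1) simp_all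
  also have "\<dots> = Suc (card (hyps U0 m) * CARD('a))" by (simp add: card_image card_cartesian_product)
  also have "\<dots> \<le> Suc (tt CARD('a) m * CARD('a))" using IH by simp
  finally show ?case by (simp add: mult.commute)
qed

lemma line_witness:
  fixes D E :: "('a::field ^ 'n) set"
  assumes "vec.subspace D" "vec.subspace E" "w \<in> D" "w \<notin> E"
  shows "{L. vec.subspace L \<and> vec.dim L = 1 \<and> L \<subseteq> D} \<noteq> {L. vec.subspace L \<and> vec.dim L = 1 \<and> L \<subseteq> E}"
proof -
  have w0: "w \<noteq> 0" using assms(2,4) vec.subspace_0 by blast
  let ?L = "vec.span {w}"
  have "vec.dim {w} = 1" using vec.dim_insert[of w "{}"] w0 by simp
  then have "vec.dim ?L = 1" by simp
  moreover have "?L \<subseteq> D" using assms(1,3) vec.span_minimal by blast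
  moreover have "\<not> ?L \<subseteq> E" using assms(4) vec.span_base[of w "{w}"] by blast
  ultimately show ?thesis using vec.subspace_span by blast
qed

lemma at_inf_distinct:
  fixes A B :: "('a::field ^ 'n) set"
  assumes "aff_space k A" "aff_space m B" "aff_dir A \<noteq> aff_dir B"
  shows "at_infinity A \<noteq> at_infinity B"
proof -
  have s: "vec.subspace (aff_dir A)" "vec.subspace (aff_dir B)" using aff_spaceE(1) assms by blast+
  show ?thesis
  proof (cases "aff_dir A \<subseteq> aff_dir B")
    case True
    then obtain w where "w \<in> aff_dir B" "w \<notin> aff_dir A" using assms(3) by blast
    then show ?thesis unfolding at_infinity_def using line_witness[OF s(2) s(1)] by metis
  next
    case False
    then obtain w where "w \<in> aff_dir A" "w \<notin> aff_dir B" by blast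
    then show ?thesis unfolding at_infinity_def using line_witness[OF s(1) s(2)] by metis
  qed
qed

lemma dir_sub:
  fixes \<sigma> \<Gamma> U :: "('a::field ^ 'n) set"
  assumes "aff_space k \<sigma>" "\<sigma> \<subseteq> \<Gamma>" "\<Gamma> = (\<lambda>w. x + w) ` U" "vec.subspace U"
  shows "aff_dir \<sigma> \<subseteq> U"
proof
  obtain z where z: "z \<in> \<sigma>" using aff_spaceE(3)[OF assms(1)] by blast
  have G: "\<Gamma> = (\<lambda>w. z + w) ` U" using coset_recenter[OF assms(4,3)] z assms(2) by blast
  have s: "\<sigma> = (\<lambda>w. z + w) ` aff_dir \<sigma>" using aff_spaceE(4)[OF assms(1) z] .
  fix w assume "w \<in> aff_dir \<sigma>"
  then have "z + w \<in> \<Gamma>" using s assms(2) by blast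
  then show "w \<in> U" using G by auto
qed

lemma aff_inter_eq:
  fixes \<sigma> \<tau> :: "('a::field ^ 'n) set"
  assumes "aff_space k \<sigma>" "aff_space k' \<tau>" "\<sigma> \<inter> \<tau> \<noteq> {}" "aff_dir \<sigma> = aff_dir \<tau>"
  shows "\<sigma> = \<tau>"
proof -
  obtain z where "z \<in> \<sigma>" "z \<in> \<tau>" using assms(3) by blast
  then show ?thesis using aff_spaceE(4)[OF assms(1)] aff_spaceE(4)[OF assms(2)] assms(4) by metis
qed

theorem mainTheorem2:
  fixes S :: "('a::{field,finite} ^ 'n) set set" and k :: nat
  assumes "1 \<le> k" and "k < CARD('n)"
    and "\<forall>\<sigma>\<in>S. aff_space k \<sigma>"
    and "\<forall>\<sigma>1\<in>S. \<forall>\<sigma>2\<in>S. \<sigma>1 \<noteq> \<sigma>2 \<longrightarrow> aff_space (k - 1) (\<sigma>1 \<inter> \<sigma>2)"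
    and "\<not> (\<exists>P. aff_space (k - 1) P \<and> S \<subseteq> pencil k P)"
  shows "card S \<le> theta CARD('a) k
    \<and> (card S = theta CARD('a) k \<longleftrightarrow>
         (\<exists>\<Gamma>. aff_space (k + 1) \<Gamma> \<and> (\<forall>\<sigma>\<in>S. \<sigma> \<subseteq> \<Gamma>)
            \<and> card S = theta CARD('a) k
            \<and> (\<forall>\<sigma>1\<in>S. \<forall>\<sigma>2\<in>S. \<sigma>1 \<noteq> \<sigma>2 \<longrightarrow> at_infinity \<sigma>1 \<noteq> at_infinity \<sigma>2)
            \<and> (\<forall>\<tau>. aff_space k \<tau> \<and> \<tau> \<subseteq> \<Gamma> \<and> \<tau> \<notin> S \<longrightarrow>
                  (\<exists>\<sigma>\<in>S. at_infinity \<sigma> = at_infinity \<tau>))))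
    \<and> (\<exists>\<Gamma>. aff_space (k + 1) \<Gamma> \<and> (\<forall>\<sigma>\<in>S. \<sigma> \<subseteq> \<Gamma>))"
proof -
  note Ssp = assms(3) and Sint = assms(4)
  have q2: "CARD('a) \<ge> 2"
  proof -
    have "card {0::'a, 1} \<le> CARD('a)" by (rule card_mono) simp_all
    then show ?thesis by simp
  qed
  obtain \<sigma>1 \<sigma>2 where s12: "\<sigma>1 \<in> S" "\<sigma>2 \<in> S" "\<sigma>1 \<noteq> \<sigma>2"
  proof -
    have "\<exists>\<sigma>1\<in>S. \<exists>\<sigma>2\<in>S. \<sigma>1 \<noteq> \<sigma>2"
    proof (rule ccontr)
      assume H: "\<not> (\<exists>\<sigma>1\<in>S. \<exists>\<sigma>2\<in>S. \<sigma>1 \<noteq> \<sigma>2)"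
      show False
      proof (cases "S = {}")
        case True
        have dimU: "vec.dim (UNIV::('a^'n) set) = CARD('n)" by (rule vec_dim_card)
        have "k - 1 \<le> vec.dim (UNIV::('a^'n) set)" using dimU assms(2) by linarith
        from exists_subspace_dim[OF vec.subspace_UNIV this]
        obtain W :: "('a^'n) set" where W: "vec.subspace W" "vec.dim W = k - 1" by blast
        have "aff_space (k - 1) ((\<lambda>w. 0 + w) ` W)" using aff_spaceI[OF W] by blast
        then show False using assms(5) True by blast
      next
        case False
        then obtain \<sigma> where \<sigma>: "\<sigma> \<in> S" by blast
        then have S1: "S = {\<sigma>}" using H by blast
        have sp: "aff_space k \<sigma>" using Ssp \<sigma> by blast
        obtain x where x: "x \<in> \<sigma>" using aff_spaceE(3)[OF sp] by blast
        obtain W where W: "vec.subspace W" "W \<subseteq> aff_dir \<sigma>" "vec.dim W = k - 1"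
          using exists_subspace_dim[OF aff_spaceE(1)[OF sp], of "k - 1"] aff_spaceE(2)[OF sp] by auto
        have P: "aff_space (k - 1) ((\<lambda>w. x + w) ` W)" using aff_spaceI[OF W(1,3)] by blast
        have "(\<lambda>w. x + w) ` W \<subseteq> \<sigma>" using W(2) aff_spaceE(4)[OF sp x] by blast
        then have "S \<subseteq> pencil k ((\<lambda>w. x + w) ` W)" unfolding pencil_def using S1 sp by blast
        then show False using assms(5) P by blast
      qed
    qed
    then show ?thesis using that by blast
  qed
  have sp1: "aff_space k \<sigma>1" and sp2: "aff_space k \<sigma>2" using Ssp s12 by blast+
  define P where "P = \<sigma>1 \<inter> \<sigma>2"
  have spP: "aff_space (k - 1) P" unfolding P_def using Sint s12 by blast
  obtain x where xP: "x \<in> P" using aff_spaceE(3)[OF spP] by blast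
  define D1 where "D1 = aff_dir \<sigma>1"
  define D2 where "D2 = aff_dir \<sigma>2"
  have D1s: "vec.subspace D1" "vec.dim D1 = k" using aff_spaceE(1,2)[OF sp1] D1_def by auto
  have D2s: "vec.subspace D2" "vec.dim D2 = k" using aff_spaceE(1,2)[OF sp2] D2_def by auto
  have s1x: "\<sigma>1 = (\<lambda>w. x + w) ` D1" using aff_spaceE(4)[OF sp1] xP D1_def P_def by blast
  have s2x: "\<sigma>2 = (\<lambda>w. x + w) ` D2" using aff_spaceE(4)[OF sp2] xP D2_def P_def by blast
  have Px: "P = (\<lambda>w. x + w) ` (D1 \<inter> D2)" unfolding P_def using s1x s2x coset_Int by metis
  have DIs: "vec.subspace (D1 \<inter> D2)" using vec.subspace_inter D1s D2s by blast
  have dDI: "vec.dim (D1 \<inter> D2) = k - 1"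
    using aff_spaceE(2)[OF spP] aff_dir_coset[OF DIs] Px by metis
  define U where "U = {a + b |a b. a \<in> D1 \<and> b \<in> D2}"
  have Us: "vec.subspace U" unfolding U_def using vec.subspace_sums D1s D2s by blast
  have dU: "vec.dim U = k + 1"
    using vec.dim_sums_Int[OF D1s(1) D2s(1)] dDI D1s D2s assms(1) unfolding U_def by simp
  have D1U: "D1 \<subseteq> U" unfolding U_def using D2s(1) vec.subspace_0 by force
  have D2U: "D2 \<subseteq> U" unfolding U_def using D1s(1) vec.subspace_0 by force
  define \<Gamma> where "\<Gamma> = (\<lambda>w. x + w) ` U"
  have spG: "aff_space (k + 1) \<Gamma>" unfolding \<Gamma>_def using aff_spaceI[OF Us dU] by blast
  have s1G: "\<sigma>1 \<subseteq> \<Gamma>" unfolding \<Gamma>_def s1x using D1U by blast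
  have s2G: "\<sigma>2 \<subseteq> \<Gamma>" unfolding \<Gamma>_def s2x using D2U by blast
  have claim1: "\<sigma> \<inter> \<Gamma> = P" if \<sigma>: "\<sigma> \<in> S" "\<not> \<sigma> \<subseteq> \<Gamma>" for \<sigma>
  proof -
    have sp: "aff_space k \<sigma>" using Ssp \<sigma> by blast
    have n1: "\<sigma> \<noteq> \<sigma>1" "\<sigma> \<noteq> \<sigma>2" using \<sigma> s1G s2G by auto
    have Q1: "aff_space (k - 1) (\<sigma> \<inter> \<sigma>1)" using Sint \<sigma>(1) s12 n1 by blast
    have Q2: "aff_space (k - 1) (\<sigma> \<inter> \<sigma>2)" using Sint \<sigma>(1) s12 n1 by blast
    obtain y where y: "y \<in> \<sigma> \<inter> \<sigma>1" using aff_spaceE(3)[OF Q1] by blast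
    define D where "D = aff_dir \<sigma>"
    have Ds: "vec.subspace D" "vec.dim D = k" using aff_spaceE(1,2)[OF sp] D_def by auto
    have sy: "\<sigma> = (\<lambda>w. y + w) ` D" using aff_spaceE(4)[OF sp] y D_def by blast
    have Gy: "\<Gamma> = (\<lambda>w. y + w) ` U" using coset_recenter[OF Us \<Gamma>_def] y s1G by blast
    have sGy: "\<sigma> \<inter> \<Gamma> = (\<lambda>w. y + w) ` (D \<inter> U)" using sy Gy coset_Int by metis
    have "\<not> D \<subseteq> U" using sy Gy \<sigma>(2) by blast
    then have "D \<inter> U \<subset> D" by blast
    then have "vec.dim (D \<inter> U) < k"
      using subspace_psubset_dim[OF vec.subspace_inter[OF Ds(1) Us] Ds(1)] Ds(2) by simp
    then have dle: "vec.dim (D \<inter> U) \<le> k - 1" by simp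
    have DUs: "vec.subspace (D \<inter> U)" using vec.subspace_inter[OF Ds(1) Us] .
    have e1: "\<sigma> \<inter> \<sigma>1 = \<sigma> \<inter> \<Gamma>"
      using aff_sub_eq[OF Q1 _ DUs sGy dle] s1G by blast
    have e2: "\<sigma> \<inter> \<sigma>2 = \<sigma> \<inter> \<Gamma>"
      using aff_sub_eq[OF Q2 _ DUs sGy dle] s2G by blast
    have "\<sigma> \<inter> \<sigma>1 \<subseteq> P" unfolding P_def using e1 e2 by blast
    then have "\<sigma> \<inter> \<sigma>1 = P" using aff_sub_eq[OF Q1 _ DIs Px] dDI by simp
    then show ?thesis using e1 by simp
  qed
  obtain \<sigma>3 where s3: "\<sigma>3 \<in> S" "\<not> P \<subseteq> \<sigma>3"
    using assms(5) spP Ssp unfolding pencil_def by blast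
  have s3G: "\<sigma>3 \<subseteq> \<Gamma>" using claim1 s3 by blast
  have allG: "\<forall>\<sigma>\<in>S. \<sigma> \<subseteq> \<Gamma>"
  proof (rule ccontr)
    assume "\<not> (\<forall>\<sigma>\<in>S. \<sigma> \<subseteq> \<Gamma>)"
    then obtain \<sigma> where \<sigma>: "\<sigma> \<in> S" "\<not> \<sigma> \<subseteq> \<Gamma>" by blast
    have c: "\<sigma> \<inter> \<Gamma> = P" using claim1 \<sigma> by blast
    have "\<sigma> \<noteq> \<sigma>3" using \<sigma> s3G by blast
    then have Q: "aff_space (k - 1) (\<sigma> \<inter> \<sigma>3)" using Sint \<sigma>(1) s3(1) by blast
    have "\<sigma> \<inter> \<sigma>3 \<subseteq> P" using c s3G by blast
    then have "\<sigma> \<inter> \<sigma>3 = P" by (rule aff_sub_eq[OF Q _ DIs Px]) (simp add: dDI)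
    then show False using s3(2) by blast
  qed
  have dirH: "aff_dir ` S \<subseteq> hyps U k"
  proof
    fix D assume "D \<in> aff_dir ` S"
    then obtain \<sigma> where \<sigma>: "\<sigma> \<in> S" "D = aff_dir \<sigma>" by blast
    have sp: "aff_space k \<sigma>" using Ssp \<sigma> by blast
    have "D \<subseteq> U" using dir_sub[OF sp _ \<Gamma>_def Us] allG \<sigma> by blast
    then show "D \<in> hyps U k" unfolding hyps_def using aff_spaceE(1,2)[OF sp] \<sigma> by blast
  qed
  have inj: "inj_on aff_dir S"
  proof (rule inj_onI)
    fix \<sigma> \<tau> assume H: "\<sigma> \<in> S" "\<tau> \<in> S" "aff_dir \<sigma> = aff_dir \<tau>"
    show "\<sigma> = \<tau>"
    proof (rule ccontr)
      assume "\<sigma> \<noteq> \<tau>"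
      then have "aff_space (k - 1) (\<sigma> \<inter> \<tau>)" using Sint H by blast
      then have "\<sigma> \<inter> \<tau> \<noteq> {}" using aff_spaceE(3) by blast
      then show False using aff_inter_eq[of k \<sigma> k \<tau>] Ssp H \<open>\<sigma> \<noteq> \<tau>\<close> by blast
    qed
  qed
  have finH: "finite (hyps U k)" by (rule finite)
  have cH: "card (hyps U k) \<le> theta CARD('a) k"
    using hyp_count[OF Us dU] theta_tt[OF q2] by simp
  have cS: "card S = card (aff_dir ` S)" using card_image[OF inj] by (rule sym)
  have le: "card S \<le> theta CARD('a) k"
    using cS card_mono[OF finH dirH] cH by simp
  have eq: "card S = theta CARD('a) k \<longrightarrow>
         (\<forall>\<sigma>1\<in>S. \<forall>\<sigma>2\<in>S. \<sigma>1 \<noteq> \<sigma>2 \<longrightarrow> at_infinity \<sigma>1 \<noteq> at_infinity \<sigma>2)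
            \<and> (\<forall>\<tau>. aff_space k \<tau> \<and> \<tau> \<subseteq> \<Gamma> \<and> \<tau> \<notin> S \<longrightarrow>
                  (\<exists>\<sigma>\<in>S. at_infinity \<sigma> = at_infinity \<tau>))"
  proof
    assume cE: "card S = theta CARD('a) k"
    have "aff_dir ` S = hyps U k"
      using card_seteq[OF finH dirH] cS cE cH by simp
    show "(\<forall>\<sigma>1\<in>S. \<forall>\<sigma>2\<in>S. \<sigma>1 \<noteq> \<sigma>2 \<longrightarrow> at_infinity \<sigma>1 \<noteq> at_infinity \<sigma>2)
            \<and> (\<forall>\<tau>. aff_space k \<tau> \<and> \<tau> \<subseteq> \<Gamma> \<and> \<tau> \<notin> S \<longrightarrow>
                  (\<exists>\<sigma>\<in>S. at_infinity \<sigma> = at_infinity \<tau>))"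
    proof (intro conjI ballI allI impI)
      fix \<sigma>a \<sigma>b assume "\<sigma>a \<in> S" "\<sigma>b \<in> S" "\<sigma>a \<noteq> \<sigma>b"
      then show "at_infinity \<sigma>a \<noteq> at_infinity \<sigma>b"
      proof -
        have "aff_dir \<sigma>a \<noteq> aff_dir \<sigma>b" using inj_on_contraD[OF inj \<open>\<sigma>a \<noteq> \<sigma>b\<close> \<open>\<sigma>a \<in> S\<close> \<open>\<sigma>b \<in> S\<close>] .
        moreover have "aff_space k \<sigma>a" "aff_space k \<sigma>b" using Ssp \<open>\<sigma>a \<in> S\<close> \<open>\<sigma>b \<in> S\<close> by blast+
        ultimately show ?thesis using at_inf_distinct by blast
      qed
    next
      fix \<tau> assume \<tau>: "aff_space k \<tau> \<and> \<tau> \<subseteq> \<Gamma> \<and> \<tau> \<notin> S"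
      have "aff_dir \<tau> \<subseteq> U" using dir_sub[OF _ _ \<Gamma>_def Us] \<tau> by blast
      then have "aff_dir \<tau> \<in> hyps U k" unfolding hyps_def using aff_spaceE(1,2) \<tau> by blast
      then have "aff_dir \<tau> \<in> aff_dir ` S" using \<open>aff_dir ` S = hyps U k\<close> by simp
      then obtain \<sigma> where "\<sigma> \<in> S" "aff_dir \<tau> = aff_dir \<sigma>" by (rule imageE)
      then show "\<exists>\<sigma>\<in>S. at_infinity \<sigma> = at_infinity \<tau>" unfolding at_infinity_def by metis
    qed
  qed
  show ?thesis
  proof (intro conjI)
    show "card S \<le> theta CARD('a) k" by (rule le)
    show "\<exists>\<Gamma>. aff_space (k + 1) \<Gamma> \<and> (\<forall>\<sigma>\<in>S. \<sigma> \<subseteq> \<Gamma>)" using spG allG by blast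
  next
    show "(card S = theta CARD('a) k \<longleftrightarrow>
         (\<exists>\<Gamma>. aff_space (k + 1) \<Gamma> \<and> (\<forall>\<sigma>\<in>S. \<sigma> \<subseteq> \<Gamma>)
            \<and> card S = theta CARD('a) k
            \<and> (\<forall>\<sigma>1\<in>S. \<forall>\<sigma>2\<in>S. \<sigma>1 \<noteq> \<sigma>2 \<longrightarrow> at_infinity \<sigma>1 \<noteq> at_infinity \<sigma>2)
            \<and> (\<forall>\<tau>. aff_space k \<tau> \<and> \<tau> \<subseteq> \<Gamma> \<and> \<tau> \<notin> S \<longrightarrow>
                  (\<exists>\<sigma>\<in>S. at_infinity \<sigma> = at_infinity \<tau>))))"
    proof
      assume cE: "card S = theta CARD('a) k"
      have A: "aff_space (k + 1) \<Gamma> \<and> (\<forall>\<sigma>\<in>S. \<sigma> \<subseteq> \<Gamma>) \<and> card S = theta CARD('a) k" using spG allG cE by blast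
      have B: "(\<forall>\<sigma>1\<in>S. \<forall>\<sigma>2\<in>S. \<sigma>1 \<noteq> \<sigma>2 \<longrightarrow> at_infinity \<sigma>1 \<noteq> at_infinity \<sigma>2)
            \<and> (\<forall>\<tau>. aff_space k \<tau> \<and> \<tau> \<subseteq> \<Gamma> \<and> \<tau> \<notin> S \<longrightarrow>
                  (\<exists>\<sigma>\<in>S. at_infinity \<sigma> = at_infinity \<tau>))" by (rule mp[OF eq cE])
      show "\<exists>\<Gamma>. aff_space (k + 1) \<Gamma> \<and> (\<forall>\<sigma>\<in>S. \<sigma> \<subseteq> \<Gamma>)
            \<and> card S = theta CARD('a) k
            \<and> (\<forall>\<sigma>1\<in>S. \<forall>\<sigma>2\<in>S. \<sigma>1 \<noteq> \<sigma>2 \<longrightarrow> at_infinity \<sigma>1 \<noteq> at_infinity \<sigma>2)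
            \<and> (\<forall>\<tau>. aff_space k \<tau> \<and> \<tau> \<subseteq> \<Gamma> \<and> \<tau> \<notin> S \<longrightarrow>
                  (\<exists>\<sigma>\<in>S. at_infinity \<sigma> = at_infinity \<tau>))"
        using A B by (elim conjE) (intro exI[of _ \<Gamma>] conjI; assumption)
    next
      assume "\<exists>\<Gamma>. aff_space (k + 1) \<Gamma> \<and> (\<forall>\<sigma>\<in>S. \<sigma> \<subseteq> \<Gamma>)
            \<and> card S = theta CARD('a) k
            \<and> (\<forall>\<sigma>1\<in>S. \<forall>\<sigma>2\<in>S. \<sigma>1 \<noteq> \<sigma>2 \<longrightarrow> at_infinity \<sigma>1 \<noteq> at_infinity \<sigma>2)
            \<and> (\<forall>\<tau>. aff_space k \<tau> \<and> \<tau> \<subseteq> \<Gamma> \<and> \<tau> \<notin> S \<longrightarrow>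
                  (\<exists>\<sigma>\<in>S. at_infinity \<sigma> = at_infinity \<tau>))"
      then show "card S = theta CARD('a) k" by (elim exE conjE)
    qed
  qed
qed

end
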